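(* Let $K$ be a field of characteristic $0$ and let $f\in K[x_1,\ldots,x_n]$ be a homogeneous polynomial of degree $d$. The following two properties are equivalent: (i) $f$ is a monomial (times a nonzero constant) which depends on all of its $n$ variables; (ii) the Lie algebra $\mathfrak{g}_f$ is an $(n-1)$-dimensional subspace of the space of diagonal $n\times n$ matrices.
   Context: For $P\in K[x_1,\ldots,x_n]$, the Lie algebra $\mathfrak{g}_P$ of $P$ is the Lie algebra (tangent space at the identity) of the group of invariants $\{A\in GL_n(K): P(A.x)=P(x)\}$; equivalently, $\mathfrak{g}_P$ is the linear subspace of matrices $A=(a_{ij})\in M_n(K)$ such that $\sum_{i,j\in[n]} a_{ij}\,x_j\,\frac{\partial P}{\partial x_i}=0$. *)

theory Defs
  imports "HOL-Analysis.Analysis"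
begin

text \<open>A polynomial in the variables x_i (i ranging over the finite type 'n) with
coefficients in 'a is represented by its coefficient function: P m is the coefficient
of the monomial with exponent vector m.\<close>

type_synonym ('a, 'n) mpoly_fun = "('n \<Rightarrow> nat) \<Rightarrow> 'a"

definition is_mpoly :: "('a::zero, 'n) mpoly_fun \<Rightarrow> bool" where
  "is_mpoly P \<longleftrightarrow> finite {m. P m \<noteq> 0}"

definition homogeneous_of_degree :: "('a::zero, 'n::finite) mpoly_fun \<Rightarrow> nat \<Rightarrow> bool" where
  "homogeneous_of_degree P d \<longleftrightarrow> (\<forall>m. P m \<noteq> 0 \<longrightarrow> (\<Sum>i\<in>UNIV. m i) = d)"

definition pderiv_var :: "'n \<Rightarrow> ('a::semiring_1, 'n) mpoly_fun \<Rightarrow> ('a, 'n) mpoly_fun" where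
  "pderiv_var i P = (\<lambda>m. of_nat (m i + 1) * P (m(i := m i + 1)))"

definition mult_var :: "'n \<Rightarrow> ('a::zero, 'n) mpoly_fun \<Rightarrow> ('a, 'n) mpoly_fun" where
  "mult_var j P = (\<lambda>m. if m j = 0 then 0 else P (m(j := m j - 1)))"

definition monomial_fun :: "'a::zero \<Rightarrow> ('n \<Rightarrow> nat) \<Rightarrow> ('a, 'n) mpoly_fun" where
  "monomial_fun c a = (\<lambda>m. if m = a then c else 0)"

text \<open>n x n matrices over 'a (n = CARD('n)) are represented as vectors indexed by 'n \<times> 'n,
A $ (i, j) being the (i,j) entry, so that the library vector space structure
over the field 'a (vec.dim, vec.subspace, ...) applies.\<close>

definition lie_algebra :: "('a::comm_ring_1, 'n::finite) mpoly_fun \<Rightarrow> ('a ^ ('n \<times> 'n)) set" where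
  "lie_algebra P = {A. \<forall>m. (\<Sum>i\<in>UNIV. \<Sum>j\<in>UNIV. A $ (i, j) * mult_var j (pderiv_var i P) m) = 0}"

definition diagonal_matrices :: "('a::zero ^ ('n::finite \<times> 'n)) set" where
  "diagonal_matrices = {A. \<forall>i j. i \<noteq> j \<longrightarrow> A $ (i, j) = 0}"

end

theory Submission
  imports Defs
begin

definition Ann :: "('n::finite \<Rightarrow> nat) set \<Rightarrow> ('a::field_char_0 ^ ('n \<times> 'n)) set" where
  "Ann T = {A. A \<in> diagonal_matrices \<and> (\<forall>m\<in>T. (\<Sum>i\<in>UNIV. A $ (i,i) * of_nat (m i)) = 0)}"

lemma subspace_Ann: "vec.subspace (Ann T)"
  unfolding vec.subspace_def Ann_def diagonal_matrices_def
  by (auto simp: sum.distrib algebra_simps sum_distrib_left[symmetric])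

lemma subspace_lie: "vec.subspace (lie_algebra (P::('a::field_char_0,'n::finite) mpoly_fun))"
  unfolding vec.subspace_def lie_algebra_def
  by (auto simp: sum.distrib algebra_simps sum_distrib_left[symmetric])

lemma lie_diag_term:
  fixes P :: "('a::field_char_0,'n::finite) mpoly_fun"
  assumes "A \<in> diagonal_matrices"
  shows "(\<Sum>i\<in>UNIV. \<Sum>j\<in>UNIV. A $ (i, j) * mult_var j (pderiv_var i P) m)
     = (\<Sum>i\<in>UNIV. A $ (i,i) * of_nat (m i)) * P m"
proof -
  have "(\<Sum>j\<in>UNIV. A $ (i, j) * mult_var j (pderiv_var i P) m) = A $ (i,i) * of_nat (m i) * P m" for i
  proof -
    have "(\<Sum>j\<in>UNIV. A $ (i, j) * mult_var j (pderiv_var i P) m) = A $ (i, i) * mult_var i (pderiv_var i P) m"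
    proof -
      have "(\<Sum>j\<in>UNIV-{i}. A $ (i, j) * mult_var j (pderiv_var i P) m) = 0"
        using assms by (auto simp: diagonal_matrices_def intro!: sum.neutral)
      then show ?thesis by (simp add: sum.remove[of UNIV i])
    qed
    also have "\<dots> = A $ (i,i) * of_nat (m i) * P m"
      by (cases "m i = 0") (auto simp: mult_var_def pderiv_var_def)
    finally show ?thesis .
  qed
  then show ?thesis by (simp add: sum_distrib_right)
qed

lemma diag_in_lie:
  fixes P :: "('a::field_char_0,'n::finite) mpoly_fun"
  assumes "A \<in> diagonal_matrices"
  shows "A \<in> lie_algebra P \<longleftrightarrow> A \<in> Ann {m. P m \<noteq> 0}"
  using assms unfolding lie_algebra_def Ann_def by (auto simp: lie_diag_term)


lemma dim_Ann_single:
  fixes a :: "'n::finite \<Rightarrow> nat" and k :: 'n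
  assumes ak: "a k \<noteq> 0"
  shows "vec.dim (Ann {a} :: ('a::field_char_0 ^ ('n \<times> 'n)) set) = CARD('n) - 1"
proof -
  define \<alpha> :: "'n \<Rightarrow> 'a" where "\<alpha> i = of_nat (a i)" for i
  have ak': "\<alpha> k \<noteq> 0" using ak by (simp add: \<alpha>_def)
  define B :: "'n \<Rightarrow> 'a ^ ('n \<times> 'n)" where
    "B i = \<alpha> k *s axis (i,i) 1 - \<alpha> i *s axis (k,k) 1" for i
  have Bc: "B i $ (p,q) = (if p = q then (if p = i then \<alpha> k else 0) - (if p = k then \<alpha> i else 0) else 0)" for i p q
    by (auto simp: B_def axis_def)
  define Bs where "Bs = B ` (UNIV - {k})"
  have inj: "inj_on B (UNIV - {k})"
  proof
    fix i j assume "i \<in> UNIV - {k}" "j \<in> UNIV - {k}" "B i = B j"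
    then have "B i $ (i,i) = B j $ (i,i)" by simp
    then show "i = j" using ak' \<open>i \<in> UNIV - {k}\<close> by (auto simp: Bc split: if_splits)
  qed
  have card: "card Bs = CARD('n) - 1"
    unfolding Bs_def by (simp add: card_image[OF inj] card_Diff_singleton)
  have sub: "Bs \<subseteq> Ann {a}"
  proof
    fix v assume "v \<in> Bs"
    then obtain i where i: "i \<noteq> k" "v = B i" by (auto simp: Bs_def)
    have "(\<Sum>p\<in>UNIV. v $ (p,p) * of_nat (a p)) = (\<Sum>p\<in>UNIV. (if p = i then \<alpha> k * \<alpha> p else 0) - (if p = k then \<alpha> i * \<alpha> p else 0))"
      by (rule sum.cong) (auto simp: i Bc \<alpha>_def[symmetric] algebra_simps)
    also have "\<dots> = 0" by (simp add: sum_subtractf)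
    finally show "v \<in> Ann {a}" by (auto simp: Ann_def diagonal_matrices_def i Bc)
  qed
  have span: "Ann {a} \<subseteq> vec.span Bs"
  proof
    fix D :: "'a ^ ('n \<times> 'n)" assume D: "D \<in> Ann {a}"
    have diag: "D $ (p,q) = 0" if "p \<noteq> q" for p q using D that by (auto simp: Ann_def diagonal_matrices_def)
    have lin: "(\<Sum>p\<in>UNIV. D $ (p,p) * \<alpha> p) = 0" using D by (auto simp: Ann_def \<alpha>_def)
    have lin2: "(\<Sum>p\<in>UNIV-{k}. D $ (p,p) * \<alpha> p) = - D $ (k,k) * \<alpha> k"
      using lin by (simp add: sum.remove[of UNIV k] add_eq_0_iff2 algebra_simps)
    define S where "S = (\<Sum>i\<in>UNIV-{k}. (D $ (i,i) / \<alpha> k) *s B i)"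
    have "S \<in> vec.span Bs" unfolding S_def Bs_def
      by (intro vec.span_sum vec.span_scale vec.span_base) auto
    moreover have "S = D"
    proof (rule vec_eq_iff[THEN iffD2], rule allI)
      fix x :: "'n \<times> 'n"
      obtain p q where x: "x = (p,q)" by force
      have "S $ (p,q) = (\<Sum>i\<in>UNIV-{k}. D $ (i,i) / \<alpha> k * B i $ (p,q))"
        by (simp add: S_def sum_component)
      also have "\<dots> = D $ (p,q)"
      proof (cases "p = q")
        case False then show ?thesis by (simp add: Bc diag)
      next
        case True
        show ?thesis
        proof (cases "p = k")
          case pk: True
          have "(\<Sum>i\<in>UNIV-{k}. D $ (i,i) / \<alpha> k * B i $ (p,q)) = (\<Sum>i\<in>UNIV-{k}. - (D $ (i,i) * \<alpha> i) / \<alpha> k)"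
            by (rule sum.cong) (use pk \<open>p = q\<close> in \<open>auto simp: Bc\<close>)
          also have "\<dots> = - (\<Sum>i\<in>UNIV-{k}. D $ (i,i) * \<alpha> i) / \<alpha> k"
            by (simp add: sum_divide_distrib sum_negf)
          also have "\<dots> = D $ (p,q)" using ak' pk \<open>p = q\<close> by (simp add: lin2)
          finally show ?thesis .
        next
          case False
          have "(\<Sum>i\<in>UNIV-{k}. D $ (i,i) / \<alpha> k * B i $ (p,q)) = (\<Sum>i\<in>UNIV-{k}. if i = p then D $ (p,p) else 0)"
          proof (rule sum.cong[OF refl])
            fix i assume "i \<in> UNIV - {k}"
            have "q \<noteq> k" using False \<open>p = q\<close> by simp
            then show "D $ (i,i) / \<alpha> k * B i $ (p,q) = (if i = p then D $ (p,p) else 0)"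
              using ak' by (simp add: Bc \<open>p = q\<close>)
          qed
          also have "\<dots> = D $ (p,q)" using False by (simp add: \<open>p = q\<close>)
          finally show ?thesis .
        qed
      qed
      finally show "S $ x = D $ x" by (simp add: x)
    qed
    ultimately show "D \<in> vec.span Bs" by simp
  qed
  have ind: "vec.independent Bs"
  proof (rule vec.independent_if_scalars_zero)
    show "finite Bs" by (simp add: Bs_def)
    fix f x assume sum0: "(\<Sum>x\<in>Bs. f x *s x) = 0" and x: "x \<in> Bs"
    then obtain i where i: "i \<noteq> k" "x = B i" by (auto simp: Bs_def)
    have "(\<Sum>j\<in>UNIV-{k}. f (B j) *s B j) = 0" using sum0 unfolding Bs_def
      by (simp add: sum.reindex[OF inj])
    then have "(\<Sum>j\<in>UNIV-{k}. f (B j) *s B j) $ (i,i) = 0" by simp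
    then have "(\<Sum>j\<in>UNIV-{k}. f (B j) * B j $ (i,i)) = 0" by (simp add: sum_component)
    moreover have "(\<Sum>j\<in>UNIV-{k}. f (B j) * B j $ (i,i)) = (\<Sum>j\<in>UNIV-{k}. if j = i then f (B i) * \<alpha> k else 0)"
      by (rule sum.cong) (auto simp: Bc i)
    ultimately have "f (B i) * \<alpha> k = 0" using i by simp
    then show "f x = 0" using ak' i by simp
  qed
  have "card Bs = vec.dim (Ann {a} :: ('a ^ ('n \<times> 'n)) set)"
    by (rule vec.basis_card_eq_dim[OF sub span ind])
  then show ?thesis using card by simp
qed


lemma key_idx:
  fixes a :: "'n \<Rightarrow> nat"
  assumes "i \<noteq> j" "a i \<ge> 1" "m = a(j := a j + 1, i := a i - 1)"
  shows "(m j' \<noteq> 0 \<and> (m(j' := m j' - 1))(i' := (m(j' := m j' - 1)) i' + 1) = a) \<longleftrightarrow> (i' = i \<and> j' = j)"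
proof
  assume H: "m j' \<noteq> 0 \<and> (m(j' := m j' - 1))(i' := (m(j' := m j' - 1)) i' + 1) = a"
  then have E: "(m(j' := m j' - 1))(i' := (m(j' := m j' - 1)) i' + 1) = a" by simp
  have mx: "m x = (if x = i then a i - 1 else if x = j then a j + 1 else a x)" for x
    using assms by auto
  have Ex: "(if x = i' then (if i' = j' then m j' - 1 else m i') + 1 else if x = j' then m j' - 1 else m x) = a x" for x
    using fun_cong[OF E, of x] by (simp only: fun_upd_apply)
  have m0: "m j' \<noteq> 0" using H by simp
  show "i' = i \<and> j' = j"
    using Ex[of i] Ex[of j] mx[of i] mx[of j] mx[of i'] mx[of j'] m0 assms(1,2)
    by (simp split: if_splits)
next
  assume "i' = i \<and> j' = j"
  then show "m j' \<noteq> 0 \<and> (m(j' := m j' - 1))(i' := (m(j' := m j' - 1)) i' + 1) = a"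
    using assms by (auto simp: fun_eq_iff)
qed

lemma mono_lie_subset_diag:
  fixes c :: "'a::field_char_0"
  assumes c: "c \<noteq> 0" and a: "\<forall>i. a i \<ge> 1"
  shows "lie_algebra (monomial_fun c a :: ('a,'n::finite) mpoly_fun) \<subseteq> diagonal_matrices"
proof
  fix A assume A: "A \<in> lie_algebra (monomial_fun c a :: ('a,'n) mpoly_fun)"
  show "A \<in> diagonal_matrices" unfolding diagonal_matrices_def mem_Collect_eq
  proof (intro allI impI)
    fix i j :: 'n assume ij: "i \<noteq> j"
    define m where "m = a(j := a j + 1, i := a i - 1)"
    have T: "mult_var j' (pderiv_var i' (monomial_fun c a)) m = (if i' = i \<and> j' = j then of_nat (a i) * c else 0)" for i' j'
    proof -
      have k: "(m j' \<noteq> 0 \<and> (m(j' := m j' - 1))(i' := (m(j' := m j' - 1)) i' + 1) = a) \<longleftrightarrow> (i' = i \<and> j' = j)"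
        by (rule key_idx[OF ij]) (use a m_def in auto)
      have "a i - 1 + 1 = a i" using a by (metis le_add_diff_inverse2)
      then show ?thesis using k ij
        by (auto simp: mult_var_def pderiv_var_def monomial_fun_def m_def)
    qed
    have "0 = (\<Sum>i'\<in>UNIV. \<Sum>j'\<in>UNIV. A $ (i', j') * mult_var j' (pderiv_var i' (monomial_fun c a)) m)"
      using A by (simp add: lie_algebra_def)
    also have "\<dots> = (\<Sum>i'\<in>UNIV. if i' = i then A $ (i, j) * (of_nat (a i) * c) else 0)"
      by (rule sum.cong[OF refl]) (simp add: T if_distrib cong: if_cong)
    also have "\<dots> = A $ (i, j) * (of_nat (a i) * c)" by simp
    finally have "A $ (i, j) * (of_nat (a i) * c) = 0" by simp
    moreover have "(of_nat (a i) :: 'a) \<noteq> 0" using a by (metis of_nat_0_eq_iff not_one_le_zero)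
    ultimately show "A $ (i, j) = 0" using c by simp
  qed
qed


lemma Ann_anti: "S \<subseteq> T \<Longrightarrow> Ann T \<subseteq> Ann S"
  unfolding Ann_def by auto

lemma dim_lt:
  assumes "vec.subspace S" "vec.subspace T" "S \<subset> T"
  shows "vec.dim S < vec.dim T"
  using vec.dim_psubset[of S T] assms by (simp add: vec.span_eq_iff[THEN iffD2])

lemma exists_gt:
  fixes a b :: "'n::finite \<Rightarrow> nat"
  assumes "sum a UNIV = sum b UNIV" "a \<noteq> b"
  shows "\<exists>i. b i < a i"
proof (rule ccontr)
  assume "\<not> ?thesis"
  then have le: "\<forall>i. a i \<le> b i" by (simp add: not_less)
  obtain i where "a i \<noteq> b i" using assms(2) by auto
  then have "a i < b i" using le le_neq_implies_less by blast
  then have "sum a UNIV < sum b UNIV"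
    by (intro sum_strict_mono_ex1) (use le in auto)
  then show False using assms(1) by simp
qed

lemma diag2_sum:
  fixes x y :: "'a::field_char_0"
  assumes "i \<noteq> j"
  shows "(\<Sum>p\<in>UNIV. (x *s axis (i,i) 1 - y *s axis (j,j) (1::'a)) $ (p,p) * of_nat (m p)) =
    x * of_nat (m i) - y * of_nat ((m::'n::finite \<Rightarrow> nat) j)"
proof -
  have "(\<Sum>p\<in>UNIV. (x *s axis (i,i) 1 - y *s axis (j,j) (1::'a)) $ (p,p) * of_nat (m p)) =
     (\<Sum>p\<in>UNIV. (if p = i then x * of_nat (m i) else 0) - (if p = j then y * of_nat (m j) else 0))"
    by (rule sum.cong) (use assms in \<open>auto simp: axis_def\<close>)
  also have "\<dots> = x * of_nat (m i) - y * of_nat (m j)" by (simp add: sum_subtractf)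
  finally show ?thesis .
qed

theorem proposition5:
  fixes f :: "('a::field_char_0, 'n::finite) mpoly_fun" and d :: nat
  assumes "is_mpoly f" and "homogeneous_of_degree f d"
  shows "(\<exists>c a. c \<noteq> 0 \<and> (\<forall>i. a i \<ge> 1) \<and> f = monomial_fun c a)
     \<longleftrightarrow> (lie_algebra f \<subseteq> diagonal_matrices \<and> vec.dim (lie_algebra f) = CARD('n) - 1)"
proof
  assume "\<exists>c a. c \<noteq> 0 \<and> (\<forall>i. a i \<ge> 1) \<and> f = monomial_fun c a"
  then obtain c a where c: "c \<noteq> 0" and a: "\<forall>i. a i \<ge> 1" and f: "f = monomial_fun c a" by blast
  have sub: "lie_algebra f \<subseteq> diagonal_matrices" using mono_lie_subset_diag[OF c a] f by simp
  have S: "{m. f m \<noteq> 0} = {a}" using c f by (auto simp: monomial_fun_def)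
  have "lie_algebra f = Ann {a}"
  proof
    show "lie_algebra f \<subseteq> Ann {a}" using sub diag_in_lie[of _ f] S by auto
    show "Ann {a} \<subseteq> lie_algebra f" using diag_in_lie[of _ f] S by (auto simp: Ann_def)
  qed
  moreover obtain k :: 'n where True by simp
  moreover have "a k \<noteq> 0" using a by (metis not_one_le_zero)
  ultimately have "vec.dim (lie_algebra f) = CARD('n) - 1" using dim_Ann_single by metis
  with sub show "lie_algebra f \<subseteq> diagonal_matrices \<and> vec.dim (lie_algebra f) = CARD('n) - 1" by simp
next
  assume H: "lie_algebra f \<subseteq> diagonal_matrices \<and> vec.dim (lie_algebra f) = CARD('n) - 1"
  then have sub: "lie_algebra f \<subseteq> diagonal_matrices" and dimL: "vec.dim (lie_algebra f) = CARD('n) - 1"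
    by auto
  define S where "S = {m. f m \<noteq> 0}"
  have LS: "lie_algebra f \<subseteq> Ann S" using sub diag_in_lie[of _ f] by (auto simp: S_def)
  show "\<exists>c a. c \<noteq> 0 \<and> (\<forall>i. a i \<ge> 1) \<and> f = monomial_fun c a"
  proof (cases "S \<subseteq> {\<lambda>_. 0}")
    case True
    obtain k :: 'n where True by simp
    define e :: "'n \<Rightarrow> nat" where "e = (\<lambda>i. if i = k then 1 else 0)"
    have pd0: "pderiv_var i f = (\<lambda>_. 0)" for i
    proof
      fix m :: "'n \<Rightarrow> nat"
      have "m(i := m i + 1) \<noteq> (\<lambda>_. 0)" by (metis add_is_0 fun_upd_same one_neq_zero)
      then have "f (m(i := m i + 1)) = 0" using True by (auto simp: S_def)
      then show "pderiv_var i f m = 0" by (simp add: pderiv_var_def)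
    qed
    have LU: "lie_algebra f = UNIV" by (auto simp: lie_algebra_def pd0 mult_var_def)
    have "Ann {e} \<subset> lie_algebra f"
    proof -
      have "(axis (k,k) 1 :: 'a ^ ('n \<times> 'n)) \<notin> Ann {e}"
      proof
        assume "(axis (k,k) 1 :: 'a ^ ('n \<times> 'n)) \<in> Ann {e}"
        then have "(\<Sum>p\<in>UNIV. (axis (k,k) 1 :: 'a ^ ('n \<times> 'n)) $ (p,p) * of_nat (e p)) = 0"
          by (simp add: Ann_def)
        moreover have "(\<Sum>p\<in>UNIV. (axis (k,k) 1 :: 'a ^ ('n \<times> 'n)) $ (p,p) * of_nat (e p)) = (\<Sum>p\<in>UNIV. if p = k then 1 else 0)"
          by (rule sum.cong) (auto simp: axis_def e_def)
        ultimately show False by simp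
      qed
      then show ?thesis using LU by auto
    qed
    then have "vec.dim (Ann {e} :: ('a ^ ('n \<times> 'n)) set) < vec.dim (lie_algebra f)"
      by (intro dim_lt subspace_Ann subspace_lie)
    moreover have "vec.dim (Ann {e} :: ('a ^ ('n \<times> 'n)) set) = CARD('n) - 1"
      by (rule dim_Ann_single[of e k]) (simp add: e_def)
    ultimately show ?thesis using dimL by simp
  next
    case False
    then obtain a where aS: "a \<in> S" and a0: "a \<noteq> (\<lambda>_. 0)" by auto
    then obtain k where ak: "a k \<noteq> 0" by (auto simp: fun_eq_iff)
    have dimA: "vec.dim (Ann {a} :: ('a ^ ('n \<times> 'n)) set) = CARD('n) - 1"
      by (rule dim_Ann_single[of a k, OF ak])
    have Sa: "S = {a}"
    proof (rule ccontr)
      assume "S \<noteq> {a}"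
      then obtain b where bS: "b \<in> S" and ba: "b \<noteq> a" using aS by auto
      have sums: "sum a UNIV = sum b UNIV"
        using assms(2) aS bS by (auto simp: homogeneous_of_degree_def S_def)
      obtain i where i: "b i < a i" using exists_gt[OF sums ba[symmetric]] by blast
      obtain j where j: "a j < b j" using exists_gt[OF sums[symmetric] ba] by blast
      have ij: "i \<noteq> j" using i j by auto
      define D :: "'a ^ ('n \<times> 'n)" where
        "D = of_nat (a j) *s axis (i,i) 1 - of_nat (a i) *s axis (j,j) 1"
      have Ddiag: "D \<in> diagonal_matrices" by (auto simp: D_def diagonal_matrices_def axis_def)
      have s: "(\<Sum>p\<in>UNIV. D $ (p,p) * of_nat (m p)) = of_nat (a j) * of_nat (m i) - of_nat (a i) * of_nat (m j)" for m
        unfolding D_def by (rule diag2_sum[OF ij])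
      have "D \<in> Ann {a}" using Ddiag by (simp add: Ann_def s)
      moreover have "D \<notin> Ann {a, b}"
      proof
        assume "D \<in> Ann {a, b}"
        then have "(\<Sum>p\<in>UNIV. D $ (p,p) * of_nat (b p)) = 0"
          unfolding Ann_def by blast
        then have "of_nat (a j) * of_nat (b i) - of_nat (a i) * of_nat (b j) = (0::'a)"
          by (simp only: s)
        then have "of_nat (a j * b i) = (of_nat (a i * b j) :: 'a)" by simp
        then have eq: "a j * b i = a i * b j" using of_nat_eq_iff by blast
        have "a j * b i \<le> a j * a i" using i by (intro mult_le_mono2) simp
        also have "\<dots> = a i * a j" by (rule mult.commute)
        also have "\<dots> < a i * b j" using i j by (intro mult_strict_left_mono) auto
        finally show False using eq by simp
      qed
      moreover have "(Ann {a, b} :: ('a ^ ('n \<times> 'n)) set) \<subseteq> Ann {a}" by (rule Ann_anti) auto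
      ultimately have "(Ann {a, b} :: ('a ^ ('n \<times> 'n)) set) \<subset> Ann {a}" by blast
      then have lt: "vec.dim (Ann {a, b} :: ('a ^ ('n \<times> 'n)) set) < vec.dim (Ann {a} :: ('a ^ ('n \<times> 'n)) set)"
        by (intro dim_lt subspace_Ann)
      have "lie_algebra f \<subseteq> Ann {a, b}" using LS Ann_anti[of "{a,b}" S] aS bS by auto
      then have "vec.dim (lie_algebra f) \<le> vec.dim (Ann {a, b} :: ('a ^ ('n \<times> 'n)) set)"
        by (rule vec.dim_subset)
      then show False using lt dimA dimL by simp
    qed
    have fmono: "f = monomial_fun (f a) a"
      using Sa by (auto simp: monomial_fun_def S_def fun_eq_iff)
    have fa: "f a \<noteq> 0" using aS by (simp add: S_def)
    have "\<forall>i. a i \<ge> 1"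
    proof (rule ccontr)
      assume "\<not> (\<forall>i. a i \<ge> 1)"
      then obtain k0 where k0: "a k0 = 0" by (auto simp: not_le)
      have kk: "k0 \<noteq> k" using k0 ak by auto
      have pd0: "pderiv_var k0 f = (\<lambda>_. 0)"
      proof
        fix m :: "'n \<Rightarrow> nat"
        have "m(k0 := m k0 + 1) \<noteq> a" using k0 by (metis fun_upd_same add_is_0 one_neq_zero)
        then have "f (m(k0 := m k0 + 1)) = 0" using Sa by (auto simp: S_def)
        then show "pderiv_var k0 f m = 0" by (simp add: pderiv_var_def)
      qed
      have "(axis (k0,k) 1 :: 'a ^ ('n \<times> 'n)) \<in> lie_algebra f"
      proof -
        have "(\<Sum>i\<in>UNIV. \<Sum>j\<in>UNIV. (axis (k0,k) 1 :: 'a ^ ('n \<times> 'n)) $ (i, j) * mult_var j (pderiv_var i f) m) = 0" for m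
        proof (rule sum.neutral, rule ballI, rule sum.neutral, rule ballI)
          fix i j assume "i \<in> (UNIV::'n set)" "j \<in> (UNIV::'n set)"
          show "(axis (k0,k) 1 :: 'a ^ ('n \<times> 'n)) $ (i, j) * mult_var j (pderiv_var i f) m = 0"
            by (cases "(i,j) = (k0,k)") (auto simp: axis_def pd0 mult_var_def)
        qed
        then show ?thesis by (simp add: lie_algebra_def)
      qed
      moreover have "(axis (k0,k) 1 :: 'a ^ ('n \<times> 'n)) \<notin> diagonal_matrices"
        using kk by (auto simp: diagonal_matrices_def axis_def)
      ultimately show False using sub by auto
    qed
    then show ?thesis using fmono fa by blast
  qed
qed

end
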